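(* Let $(U,V)$ be a one-dimensional robot game. Its set of winning counter values is different from $\{0\}$ if and only if there exists a counter value $x\neq 0$ such that for every $v\in V$ there is $u\in U$ with $u+v=-x$.
   Context: A robot game in dimension one is a pair $(U,V)$ of finite nonempty subsets of $\mathbb{Z}$; $U$ belongs to the reacher and $V$ to the opponent. From an initial counter value $x_0\in\mathbb{Z}$, a play proceeds in rounds: in a round starting at counter value $x$, the opponent chooses $v\in V$ and the counter becomes $x+v$, then the reacher chooses $u\in U$ and the counter becomes $x+v+u$, where the round ends. The reacher wins the play if some round ends at $0$; by convention the reacher wins immediately if the play starts at $0$ (so $0$ is always winning). Strategies are functions from play prefixes to moves. A counter value $x$ is winning if the reacher has a strategy such that, against every opponent strategy, the play from $x$ is won by the reacher. (The paper calls the winning set trivial when it is $\{0\}$.) *)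

theory Defs
  imports Main
begin

text \<open>A play prefix (history) is the list of all counter values visited so far,
  starting with the initial value: x0, x0+v1, x0+v1+u1, x0+v1+u1+v2, ...
  (moves are recoverable as differences).\<close>

type_synonym history = "int list"

fun play_hist :: "(history \<Rightarrow> int) \<Rightarrow> (history \<Rightarrow> int) \<Rightarrow> int \<Rightarrow> nat \<Rightarrow> history" where
  "play_hist \<sigma> \<tau> x0 0 = [x0]"
| "play_hist \<sigma> \<tau> x0 (Suc n) =
     (let h = play_hist \<sigma> \<tau> x0 n;
          y = last h + \<tau> h;
          h' = h @ [y]
      in h' @ [y + \<sigma> h'])"

definition strategy :: "int set \<Rightarrow> (history \<Rightarrow> int) \<Rightarrow> bool" where
  "strategy M s \<longleftrightarrow> (\<forall>h. s h \<in> M)"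

definition reacher_wins_play :: "(history \<Rightarrow> int) \<Rightarrow> (history \<Rightarrow> int) \<Rightarrow> int \<Rightarrow> bool" where
  "reacher_wins_play \<sigma> \<tau> x0 \<longleftrightarrow> (\<exists>n. last (play_hist \<sigma> \<tau> x0 n) = 0)"

definition winning :: "int set \<Rightarrow> int set \<Rightarrow> int \<Rightarrow> bool" where
  "winning U V x0 \<longleftrightarrow>
     (\<exists>\<sigma>. strategy U \<sigma> \<and> (\<forall>\<tau>. strategy V \<tau> \<longrightarrow> reacher_wins_play \<sigma> \<tau> x0))"

definition winning_set :: "int set \<Rightarrow> int set \<Rightarrow> int set" where
  "winning_set U V = {x. winning U V x}"

end

theory Submission
  imports Defs
begin

lemma last_step:
  "last (play_hist \<sigma> \<tau> x0 (Suc n)) =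
     last (play_hist \<sigma> \<tau> x0 n) + \<tau> (play_hist \<sigma> \<tau> x0 n)
     + \<sigma> (play_hist \<sigma> \<tau> x0 n @ [last (play_hist \<sigma> \<tau> x0 n) + \<tau> (play_hist \<sigma> \<tau> x0 n)])"
  by (simp add: Let_def)

theorem proposition4:
  fixes U V :: "int set"
  assumes "finite U" "U \<noteq> {}" "finite V" "V \<noteq> {}"
  shows "winning_set U V \<noteq> {0} \<longleftrightarrow> (\<exists>x. x \<noteq> 0 \<and> (\<forall>v\<in>V. \<exists>u\<in>U. u + v = - x))"
proof
  assume W: "winning_set U V \<noteq> {0}"
  have "winning U V 0"
    unfolding winning_def reacher_wins_play_def strategy_def
    using assms(2) by (rule_tac x="\<lambda>_. SOME u. u \<in> U" in exI) (auto intro: someI_ex exI[of _ 0])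
  then have "0 \<in> winning_set U V" by (simp add: winning_set_def)
  with W obtain x where x0: "x \<noteq> 0" and wx: "winning U V x"
    by (auto simp: winning_set_def)
  show "\<exists>x. x \<noteq> 0 \<and> (\<forall>v\<in>V. \<exists>u\<in>U. u + v = - x)"
  proof (rule ccontr)
    assume N: "\<not> ?thesis"
    define \<tau> where "\<tau> h = (if \<exists>v\<in>V. \<forall>u\<in>U. u + v \<noteq> - last h
        then SOME v. v \<in> V \<and> (\<forall>u\<in>U. u + v \<noteq> - last h) else SOME v. v \<in> V)" for h
    have sV: "strategy V \<tau>"
      unfolding strategy_def
    proof
      fix h
      show "\<tau> h \<in> V"
      proof (cases "\<exists>v\<in>V. \<forall>u\<in>U. u + v \<noteq> - last h")
        case True
        then have "\<exists>v. v \<in> V \<and> (\<forall>u\<in>U. u + v \<noteq> - last h)" by blast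
        from someI_ex[OF this] True show ?thesis unfolding \<tau>_def by simp
      next
        case False
        have "\<exists>v. v \<in> V" using assms(4) by blast
        from someI_ex[OF this] show ?thesis by (simp only: \<tau>_def if_not_P[OF False])
      qed
    qed
    have key: "last h \<noteq> 0 \<Longrightarrow> \<tau> h \<in> V \<and> (\<forall>u\<in>U. u + \<tau> h \<noteq> - last h)" for h
    proof -
      assume "last h \<noteq> 0"
      with N have "\<exists>v\<in>V. \<forall>u\<in>U. u + v \<noteq> - last h" by blast
      then have "\<exists>v. v \<in> V \<and> (\<forall>u\<in>U. u + v \<noteq> - last h)" by blast
      from someI_ex[OF this] \<open>\<exists>v\<in>V. \<forall>u\<in>U. u + v \<noteq> - last h\<close> show ?thesis unfolding \<tau>_def by simp
    qed
    from wx obtain \<sigma> where s: "strategy U \<sigma>" and w: "reacher_wins_play \<sigma> \<tau> x"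
      using sV unfolding winning_def by blast
    have "last (play_hist \<sigma> \<tau> x n) \<noteq> 0" for n
    proof (induction n)
      case 0 then show ?case using x0 by simp
    next
      case (Suc n)
      let ?h = "play_hist \<sigma> \<tau> x n"
      have "\<sigma> (?h @ [last ?h + \<tau> ?h]) \<in> U" using s by (simp add: strategy_def)
      with key[OF Suc.IH] have "\<sigma> (?h @ [last ?h + \<tau> ?h]) + \<tau> ?h \<noteq> - last ?h" by blast
      then show ?case by (simp only: last_step)
    qed
    with w show False unfolding reacher_wins_play_def by blast
  qed
next
  assume "\<exists>x. x \<noteq> 0 \<and> (\<forall>v\<in>V. \<exists>u\<in>U. u + v = - x)"
  then obtain x where x0: "x \<noteq> 0" and P: "\<forall>v\<in>V. \<exists>u\<in>U. u + v = - x" by blast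
  define \<sigma> where "\<sigma> h = (if \<exists>u\<in>U. u + last h = 0 then SOME u. u \<in> U \<and> u + last h = 0
      else SOME u. u \<in> U)" for h
  have sU: "strategy U \<sigma>"
    unfolding strategy_def
  proof
    fix h
    show "\<sigma> h \<in> U"
    proof (cases "\<exists>u\<in>U. u + last h = 0")
      case True
      then have "\<exists>u. u \<in> U \<and> u + last h = 0" by blast
      from someI_ex[OF this] True show ?thesis unfolding \<sigma>_def by simp
    next
      case False
      have "\<exists>u. u \<in> U" using assms(2) by blast
      from someI_ex[OF this] show ?thesis by (simp only: \<sigma>_def if_not_P[OF False])
    qed
  qed
  have "reacher_wins_play \<sigma> \<tau> x" if t: "strategy V \<tau>" for \<tau>
  proof -
    let ?h = "play_hist \<sigma> \<tau> x 0"
    let ?y = "x + \<tau> [x]"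
    have "\<tau> [x] \<in> V" using t by (simp add: strategy_def)
    with P obtain u where "u \<in> U" "u + ?y = 0" by fastforce
    then have ex: "\<exists>u\<in>U. u + last ([x] @ [?y]) = 0" by auto
    then have "\<exists>u. u \<in> U \<and> u + last ([x] @ [?y]) = 0" by blast
    from someI_ex[OF this] ex have "\<sigma> ([x] @ [?y]) + ?y = 0"
      unfolding \<sigma>_def by simp
    then have "last (play_hist \<sigma> \<tau> x 1) = 0"
      using last_step[of \<sigma> \<tau> x 0] by simp
    then show ?thesis unfolding reacher_wins_play_def by blast
  qed
  with sU have "winning U V x" unfolding winning_def by blast
  with x0 show "winning_set U V \<noteq> {0}" by (auto simp: winning_set_def)
qed

end
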